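(* For $\lambda\in\mathbb R$ let $r_\lambda(x,y)=(x^2-y^2)^3+15\lambda x^2y^2(x^2-y^2)$. Then $r_0$ has unique signature $(3,3)$, $r_{1/5}=x^6-y^6$ has unique signature $(1,1)$, and for every $\lambda$ with $0<\lambda<\tfrac15$, $r_\lambda$ has unique signature $(2,2)$.
   Context: A representation of a real binary sextic $p$ is an expression $p=\sum_{j=1}^r\lambda_j(\alpha_jx+\beta_jy)^{6}$ with $r\ge0$, $\alpha_j,\beta_j\in\mathbb R$, $0\ne\lambda_j\in\mathbb R$; it is honest if the linear forms $\alpha_jx+\beta_jy$ are pairwise non-proportional. Its badge is $(a,b)$ where $a=\#\{j:\lambda_j>0\}$, $b=\#\{j:\lambda_j<0\}$; $\mathcal B(p)$ is the set of badges of honest representations. With $(a,b)\preceq(c,d)$ iff $a\le c,b\le d$, a signature is a minimal element of $\mathcal B(p)$; $p$ has unique signature $(u,v)$ if $(u,v)$ is the only minimal element. *)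

theory Defs
  imports Complex_Main
begin

text \<open>A binary real form is modelled as its polynomial function of two real variables.
  A term of a representation is a triple (lambda, alpha, beta), standing for
  lambda * (alpha x + beta y)^6.\<close>

type_synonym term6 = "real \<times> real \<times> real"

definition represents :: "(real \<Rightarrow> real \<Rightarrow> real) \<Rightarrow> term6 list \<Rightarrow> bool" where
  "represents p ts \<longleftrightarrow>
     (\<forall>t\<in>set ts. fst t \<noteq> 0) \<and>
     (\<forall>x y. p x y = (\<Sum>t\<leftarrow>ts. fst t * (fst (snd t) * x + snd (snd t) * y) ^ 6))"

text \<open>Linear forms alpha x + beta y are proportional iff the 2x2 determinant vanishes.\<close>
definition honest :: "term6 list \<Rightarrow> bool" where
  "honest ts \<longleftrightarrow>
     (\<forall>i j. i < length ts \<and> j < length ts \<and> i \<noteq> j \<longrightarrow>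
        fst (snd (ts ! i)) * snd (snd (ts ! j)) \<noteq> fst (snd (ts ! j)) * snd (snd (ts ! i)))"

definition badge :: "term6 list \<Rightarrow> nat \<times> nat" where
  "badge ts = (length (filter (\<lambda>t. fst t > 0) ts), length (filter (\<lambda>t. fst t < 0) ts))"

definition badges :: "(real \<Rightarrow> real \<Rightarrow> real) \<Rightarrow> (nat \<times> nat) set" where
  "badges p = {badge ts | ts. represents p ts \<and> honest ts}"

definition badge_le :: "nat \<times> nat \<Rightarrow> nat \<times> nat \<Rightarrow> bool" where
  "badge_le ab cd \<longleftrightarrow> fst ab \<le> fst cd \<and> snd ab \<le> snd cd"

definition signatures :: "(real \<Rightarrow> real \<Rightarrow> real) \<Rightarrow> (nat \<times> nat) set" where
  "signatures p = {s \<in> badges p. \<forall>s'\<in>badges p. badge_le s' s \<longrightarrow> s' = s}"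

definition has_unique_signature :: "(real \<Rightarrow> real \<Rightarrow> real) \<Rightarrow> nat \<times> nat \<Rightarrow> bool" where
  "has_unique_signature p s \<longleftrightarrow> signatures p = {s}"

definition r_lam :: "real \<Rightarrow> real \<Rightarrow> real \<Rightarrow> real" where
  "r_lam l x y = (x^2 - y^2)^3 + 15 * l * x^2 * y^2 * (x^2 - y^2)"

end

theory Submission
  imports Defs
begin

definition Mom :: "term6 list \<Rightarrow> nat \<Rightarrow> real" where
  "Mom ts m = (\<Sum>t\<leftarrow>ts. fst t * fst (snd t) ^ m * snd (snd t) ^ (6 - m))"

lemma Mom_Nil[simp]: "Mom [] m = 0" by (simp add: Mom_def)
lemma Mom_Cons[simp]: "Mom (t#ts) m = fst t * fst (snd t) ^ m * snd (snd t) ^ (6 - m) + Mom ts m"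
  by (simp add: Mom_def)

lemma expand6:
  "(\<Sum>t\<leftarrow>ts. fst t * (fst (snd t) * x + snd (snd t) * 1) ^ 6) =
   (\<Sum>m\<le>6. ((if m = 0 \<or> m = 6 then 1 else if m = 1 \<or> m = 5 then 6 else if m = 2 \<or> m = 4 then 15 else 20) * Mom ts m) * x ^ m)"
proof (induction ts)
  case Nil then show ?case by simp
next
  case (Cons t ts)
  obtain c a b where t: "t = (c,a,b)" by (cases t) auto
  have "c * (a * x + b * 1) ^ 6 = (\<Sum>m\<le>6. ((if m = 0 \<or> m = 6 then 1 else if m = 1 \<or> m = 5 then 6 else if m = 2 \<or> m = 4 then 15 else 20) * (c * a^m * b^(6-m))) * x ^ m)"
    by (simp add: eval_nat_numeral atMost_Suc) algebra
  then show ?case using Cons by (simp add: t algebra_simps sum.distrib)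
qed

lemma mom_r:
  assumes "represents (r_lam l) ts"
  shows "Mom ts 0 = -1 \<and> Mom ts 1 = 0 \<and> Mom ts 2 = 1/5 - l \<and> Mom ts 3 = 0 \<and> Mom ts 4 = l - 1/5 \<and> Mom ts 5 = 0 \<and> Mom ts 6 = 1"
proof -
  define cf :: "nat \<Rightarrow> real" where "cf m = (if m = 0 \<or> m = 6 then 1 else if m = 1 \<or> m = 5 then 6 else if m = 2 \<or> m = 4 then 15 else 20) * Mom ts m" for m
  define cr :: "nat \<Rightarrow> real" where "cr m = (if m = 0 then -1 else if m = 2 then 3 - 15*l else if m = 4 then 15*l-3 else if m = 6 then 1 else 0)" for m
  have "\<forall>x. (\<Sum>m\<le>6. cf m * x^m) = (\<Sum>m\<le>6. cr m * x^m)"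
  proof
    fix x :: real
    have "(\<Sum>m\<le>6. cf m * x^m) = r_lam l x 1"
      using assms expand6[where ts=ts and x=x] unfolding represents_def cf_def by simp
    also have "\<dots> = (\<Sum>m\<le>6. cr m * x^m)"
      unfolding r_lam_def cr_def by (simp add: eval_nat_numeral atMost_Suc) algebra
    finally show "(\<Sum>m\<le>6. cf m * x^m) = (\<Sum>m\<le>6. cr m * x^m)" .
  qed
  then have h: "\<forall>m\<le>6. cf m = cr m" using polyfun_eq_coeffs by blast
  show ?thesis using h[rule_format, of 0] h[rule_format, of 1] h[rule_format, of 2] h[rule_format, of 3]
      h[rule_format, of 4] h[rule_format, of 5] h[rule_format, of 6]
    unfolding cf_def cr_def by simp
qed

definition cub :: "real \<Rightarrow> real \<Rightarrow> real \<Rightarrow> real \<Rightarrow> real \<Rightarrow> real \<Rightarrow> real" where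
  "cub f0 f1 f2 f3 a b = f0 * b^3 + f1 * a * b^2 + f2 * a^2 * b + f3 * a^3"

definition Qv :: "real \<Rightarrow> real \<Rightarrow> real \<Rightarrow> real \<Rightarrow> real \<Rightarrow> real" where
  "Qv l f0 f1 f2 f3 = (2*f0*f2 + f1^2) * (1/5 - l) - f0^2 + (2*f1*f3 + f2^2) * (l - 1/5) + f3^2"

lemma Qsum:
  "(\<Sum>t\<leftarrow>ts. fst t * (cub f0 f1 f2 f3 (fst (snd t)) (snd (snd t)))^2) =
   f0^2 * Mom ts 0 + 2*f0*f1 * Mom ts 1 + (2*f0*f2+f1^2) * Mom ts 2 + (2*f0*f3+2*f1*f2) * Mom ts 3
   + (2*f1*f3+f2^2) * Mom ts 4 + 2*f2*f3 * Mom ts 5 + f3^2 * Mom ts 6"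
proof (induction ts)
  case Nil then show ?case by simp
next
  case (Cons t ts)
  obtain c a b where t: "t = (c,a,b)" by (cases t) auto
  have "c * (cub f0 f1 f2 f3 a b)^2 = f0^2 * (c*a^0*b^6) + 2*f0*f1 * (c*a^1*b^5) + (2*f0*f2+f1^2) * (c*a^2*b^4) + (2*f0*f3+2*f1*f2) * (c*a^3*b^3)
   + (2*f1*f3+f2^2) * (c*a^4*b^2) + 2*f2*f3 * (c*a^5*b^1) + f3^2 * (c*a^6*b^0)"
    unfolding cub_def by algebra
  then show ?case using Cons by (simp add: t algebra_simps)
qed

lemma Qsum_r:
  assumes "represents (r_lam l) ts"
  shows "(\<Sum>t\<leftarrow>ts. fst t * (cub f0 f1 f2 f3 (fst (snd t)) (snd (snd t)))^2) = Qv l f0 f1 f2 f3"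
  using mom_r[OF assms] unfolding Qsum Qv_def by simp

lemma honest_pair:
  assumes "honest ts" "t1 \<in> set ts" "t2 \<in> set ts" "t1 \<noteq> t2"
  shows "fst (snd t1) * snd (snd t2) \<noteq> fst (snd t2) * snd (snd t1)"
proof -
  obtain i where i: "i < length ts" "t1 = ts ! i" using assms(2) by (auto simp: in_set_conv_nth)
  obtain j where j: "j < length ts" "t2 = ts ! j" using assms(3) by (auto simp: in_set_conv_nth)
  have "i \<noteq> j" using i j assms(4) by auto
  then show ?thesis using assms(1) i j unfolding honest_def by blast
qed

lemma sum_list_nonpos': "(\<And>t. t \<in> set ts \<Longrightarrow> g t \<le> (0::real)) \<Longrightarrow> (\<Sum>t\<leftarrow>ts. g t) \<le> 0"
  by (induction ts) (auto simp: add_nonpos_nonpos)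
lemma sum_list_nonneg': "(\<And>t. t \<in> set ts \<Longrightarrow> g t \<ge> (0::real)) \<Longrightarrow> (\<Sum>t\<leftarrow>ts. g t) \<ge> 0"
  by (induction ts) auto

definition pw :: "(real \<times> real) set \<Rightarrow> bool" where
  "pw S \<longleftrightarrow> (\<forall>u\<in>S. \<forall>v\<in>S. u \<noteq> v \<longrightarrow> fst u * snd v \<noteq> fst v * snd u)"

lemma lb_gen:
  assumes rep: "represents (r_lam l) ts" and hon: "honest ts"
    and H: "\<And>S. finite S \<Longrightarrow> card S < k \<Longrightarrow> pw S \<Longrightarrow>
        \<exists>f0 f1 f2 f3. (\<forall>u\<in>S. cub f0 f1 f2 f3 (fst u) (snd u) = 0) \<and> \<sigma> * Qv l f0 f1 f2 f3 > 0"
    and sg: "\<sigma> = 1 \<or> \<sigma> = -1"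
  shows "k \<le> length (filter (\<lambda>t. \<sigma> * fst t > 0) ts)"
proof (rule ccontr)
  assume nk: "\<not> ?thesis"
  define S where "S = snd ` set (filter (\<lambda>t. \<sigma> * fst t > 0) ts)"
  have fin: "finite S" unfolding S_def by simp
  have "card S \<le> card (set (filter (\<lambda>t. \<sigma> * fst t > 0) ts))" unfolding S_def by (rule card_image_le) simp
  also have "\<dots> \<le> length (filter (\<lambda>t. \<sigma> * fst t > 0) ts)" by (rule card_length)
  finally have cS: "card S < k" using nk by simp
  have pwS: "pw S" unfolding pw_def S_def
  proof (intro ballI impI)
    fix u v assume "u \<in> snd ` set (filter (\<lambda>t. \<sigma> * fst t > 0) ts)" "v \<in> snd ` set (filter (\<lambda>t. \<sigma> * fst t > 0) ts)" "u \<noteq> v"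
    then obtain t1 t2 where "t1 \<in> set ts" "t2 \<in> set ts" "u = snd t1" "v = snd t2" "t1 \<noteq> t2" by auto
    then show "fst u * snd v \<noteq> fst v * snd u" using honest_pair[OF hon] by blast
  qed
  obtain f0 f1 f2 f3 where f: "\<forall>u\<in>S. cub f0 f1 f2 f3 (fst u) (snd u) = 0" "\<sigma> * Qv l f0 f1 f2 f3 > 0"
    using H[OF fin cS pwS] by blast
  have "(\<Sum>t\<leftarrow>ts. \<sigma> * (fst t * (cub f0 f1 f2 f3 (fst (snd t)) (snd (snd t)))^2)) \<le> 0"
  proof (rule sum_list_nonpos')
    fix t assume t: "t \<in> set ts"
    show "\<sigma> * (fst t * (cub f0 f1 f2 f3 (fst (snd t)) (snd (snd t)))^2) \<le> 0"
    proof (cases "\<sigma> * fst t > 0")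
      case True
      then have "snd t \<in> S" unfolding S_def using t by auto
      then show ?thesis using f(1) by auto
    next
      case False
      then show ?thesis by (simp add: mult.assoc[symmetric] mult_nonpos_nonneg)
    qed
  qed
  moreover have "(\<Sum>t\<leftarrow>ts. \<sigma> * (fst t * (cub f0 f1 f2 f3 (fst (snd t)) (snd (snd t)))^2)) = \<sigma> * Qv l f0 f1 f2 f3"
    using Qsum_r[OF rep, of f0 f1 f2 f3, symmetric] by (simp add: sum_list_const_mult)
  ultimately show False using f(2) by simp
qed

lemma lb_pos:
  assumes "represents (r_lam l) ts" "honest ts"
    "\<And>S. finite S \<Longrightarrow> card S < k \<Longrightarrow> pw S \<Longrightarrow>
        \<exists>f0 f1 f2 f3. (\<forall>u\<in>S. cub f0 f1 f2 f3 (fst u) (snd u) = 0) \<and> Qv l f0 f1 f2 f3 > 0"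
  shows "k \<le> fst (badge ts)"
  using lb_gen[OF assms(1,2), of k 1] assms(3) unfolding badge_def by simp

lemma lb_neg:
  assumes "represents (r_lam l) ts" "honest ts"
    "\<And>S. finite S \<Longrightarrow> card S < k \<Longrightarrow> pw S \<Longrightarrow>
        \<exists>f0 f1 f2 f3. (\<forall>u\<in>S. cub f0 f1 f2 f3 (fst u) (snd u) = 0) \<and> Qv l f0 f1 f2 f3 < 0"
  shows "k \<le> snd (badge ts)"
  using lb_gen[OF assms(1,2), of k "-1"] assms(3) unfolding badge_def by simp

lemma card_lt2:
  assumes "finite S" "card S < 2" shows "\<exists>u. S \<subseteq> {u}"
proof (cases "S = {}")
  case True then show ?thesis by auto
next
  case False
  then obtain u where u: "u \<in> S" by auto
  have "S \<subseteq> {u}"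
  proof
    fix v assume v: "v \<in> S"
    show "v \<in> {u}"
    proof (rule ccontr)
      assume "v \<notin> {u}"
      then have "card {u, v} = 2" by auto
      moreover have "card {u, v} \<le> card S" using u v assms(1) by (intro card_mono) auto
      ultimately show False using assms(2) by linarith
    qed
  qed
  then show ?thesis by blast
qed

lemma quad_pos:
  fixes Qa Qb Qc :: real
  assumes "Qb^2 > Qa * Qc"
  shows "\<exists>h k. Qa * h^2 + 2 * Qb * h * k + Qc * k^2 > 0"
proof -
  consider "Qa > 0" | "Qc > 0" | "Qa < 0" "Qc \<le> 0" | "Qa = 0" "Qc \<le> 0" by linarith
  then show ?thesis
  proof cases
    case 1 then show ?thesis by (rule_tac x=1 in exI, rule_tac x=0 in exI) simp
  next
    case 2 then show ?thesis by (rule_tac x=0 in exI, rule_tac x=1 in exI) simp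
  next
    case 3
    have "Qa * Qb^2 + 2 * Qb * Qb * (-Qa) + Qc * (-Qa)^2 = Qa * (Qa * Qc - Qb^2)" by algebra
    moreover have "Qa * (Qa * Qc - Qb^2) > 0" using 3 assms by (intro mult_neg_neg) auto
    ultimately show ?thesis by (rule_tac x=Qb in exI, rule_tac x="-Qa" in exI) simp
  next
    case 4
    then have "Qb \<noteq> 0" using assms by auto
    have "Qa * ((1 - Qc)/(2*Qb))^2 + 2 * Qb * ((1 - Qc)/(2*Qb)) * 1 + Qc * 1^2 = 1"
      using 4 \<open>Qb \<noteq> 0\<close> by (simp add: field_simps)
    then show ?thesis by (rule_tac x="(1 - Qc)/(2*Qb)" in exI, rule_tac x=1 in exI) simp
  qed
qed

lemma key0:
  fixes a1 b1 a2 b2 :: real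
  assumes np: "a1 * b2 \<noteq> a2 * b1"
  shows "\<exists>f0 f1 f2 f3. cub f0 f1 f2 f3 a1 b1 = 0 \<and> cub f0 f1 f2 f3 a2 b2 = 0 \<and> Qv 0 f0 f1 f2 f3 > 0"
proof -
  define G0 where "G0 = a1*a2"
  define G1 where "G1 = -(a1*b2+a2*b1)"
  define G2 where "G2 = b1*b2"
  define Q where "Q h k = Qv 0 (k*G0) (h*G0+k*G1) (h*G1+k*G2) (h*G2)" for h k
  define Qa where "Qa = Q 1 0"
  define Qc where "Qc = Q 0 1"
  define Qb where "Qb = (Q 1 1 - Qa - Qc)/2"
  have Qexp: "Q h k = Qa * h^2 + 2 * Qb * h * k + Qc * k^2" for h k
    unfolding Qa_def Qb_def Qc_def Q_def Qv_def by (simp add: field_simps) algebra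
  define X where "X = (a1-b1)*(a2-b2)*(a1+b1)*(a2+b2)"
  define Y where "Y = (a1-b1)*(a2+b2)+(a2-b2)*(a1+b1)"
  have D: "Qb^2 - Qa * Qc = (4*X^2 + Y^4)/100"
    unfolding Qa_def Qb_def Qc_def Q_def Qv_def X_def Y_def G0_def G1_def G2_def by (simp add: field_simps) algebra
  have XY: "(2*(a1*b2 - a2*b1))^2 = Y^2 - 4*X" unfolding X_def Y_def by algebra
  have "4*X^2 + Y^4 > 0"
  proof (rule ccontr)
    assume "\<not> 4*X^2 + Y^4 > 0"
    moreover have "4*X^2 \<ge> 0" "Y^4 \<ge> 0" by auto
    ultimately have "X^2 = 0" "Y^4 = 0" by linarith+
    then have "X = 0" "Y = 0" by auto
    then have "(2*(a1*b2 - a2*b1))^2 = 0" using XY by simp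
    then show False using np by simp
  qed
  then have "Qb^2 > Qa * Qc" using D by simp
  then obtain h k where hk: "Qa * h^2 + 2 * Qb * h * k + Qc * k^2 > 0" using quad_pos by blast
  have c1: "cub (k*G0) (h*G0+k*G1) (h*G1+k*G2) (h*G2) a1 b1 = 0"
    unfolding cub_def G0_def G1_def G2_def by algebra
  have c2: "cub (k*G0) (h*G0+k*G1) (h*G1+k*G2) (h*G2) a2 b2 = 0"
    unfolding cub_def G0_def G1_def G2_def by algebra
  have "Qv 0 (k*G0) (h*G0+k*G1) (h*G1+k*G2) (h*G2) > 0" using hk Qexp[of h k] unfolding Q_def by linarith
  with c1 c2 show ?thesis by (intro exI conjI)
qed

lemma cover3:
  assumes "finite S" "card S < 3" "pw S"
  shows "\<exists>a1 b1 a2 b2. a1*b2 \<noteq> a2*b1 \<and> (\<forall>w\<in>S. w = (0,0) \<or> w = (a1,b1) \<or> w = (a2,b2))"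
proof (cases "\<exists>u. S \<subseteq> {u}")
  case True
  then obtain u where u: "S \<subseteq> {u}" by blast
  obtain a b where ab: "u = (a,b)" by (cases u)
  show ?thesis
  proof (cases "a = 0 \<and> b = 0")
    case True
    then have "\<forall>w\<in>S. w = (0,0)" using u ab by auto
    then show ?thesis by (rule_tac x=1 in exI, rule_tac x=0 in exI, rule_tac x=0 in exI, rule_tac x=1 in exI) simp
  next
    case False
    then have "a^2 + b^2 > 0" by (simp add: sum_power2_gt_zero_iff)
    then have "a*a - (-b)*b > 0" by (simp add: power2_eq_square)
    then have "a*a \<noteq> (-b)*b" by linarith
    moreover have "\<forall>w\<in>S. w = (a,b)" using u ab by auto
    ultimately show ?thesis by (rule_tac x=a in exI, rule_tac x=b in exI, rule_tac x="-b" in exI, rule_tac x=a in exI) simp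
  qed
next
  case False
  then obtain u where u: "u \<in> S" by blast
  from False obtain v where v: "v \<in> S" "v \<noteq> u" using u by blast
  have sub: "S \<subseteq> {u,v}"
  proof
    fix w assume w: "w \<in> S"
    show "w \<in> {u,v}"
    proof (rule ccontr)
      assume "w \<notin> {u,v}"
      then have "card {u, v, w} = 3" using v by auto
      moreover have "card {u, v, w} \<le> card S" using u v w assms(1) by (intro card_mono) auto
      ultimately show False using assms(2) by linarith
    qed
  qed
  have pw': "\<forall>x\<in>S. \<forall>y\<in>S. x \<noteq> y \<longrightarrow> fst x * snd y \<noteq> fst y * snd x" using assms(3) unfolding pw_def .
  have "u \<noteq> v" using v(2) by simp
  then have np: "fst u * snd v \<noteq> fst v * snd u" using pw' u v(1) by simp
  have cv: "\<forall>w\<in>S. w = (0,0) \<or> w = (fst u, snd u) \<or> w = (fst v, snd v)" using sub by auto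
  show ?thesis
    by (rule exI[where x="fst u"], rule exI[where x="snd u"], rule exI[where x="fst v"], rule exI[where x="snd v"]) (use np cv in simp)
qed

lemma cub_zero[simp]: "cub f0 f1 f2 f3 0 0 = 0" by (simp add: cub_def)

lemma inst0_pos:
  assumes "finite S" "card S < 3" "pw S"
  shows "\<exists>f0 f1 f2 f3. (\<forall>u\<in>S. cub f0 f1 f2 f3 (fst u) (snd u) = 0) \<and> Qv 0 f0 f1 f2 f3 > 0"
proof -
  obtain a1 b1 a2 b2 where np: "a1*b2 \<noteq> a2*b1" and cov: "\<forall>w\<in>S. w = (0,0) \<or> w = (a1,b1) \<or> w = (a2,b2)"
    using cover3[OF assms] by blast
  obtain f0 f1 f2 f3 where f: "cub f0 f1 f2 f3 a1 b1 = 0" "cub f0 f1 f2 f3 a2 b2 = 0" "Qv 0 f0 f1 f2 f3 > 0"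
    using key0[OF np] by blast
  have "\<forall>u\<in>S. cub f0 f1 f2 f3 (fst u) (snd u) = 0" using cov f by auto
  with f(3) show ?thesis by (intro exI[where x=f0] exI[where x=f1] exI[where x=f2] exI[where x=f3] conjI)
qed

lemma inst0_neg:
  assumes "finite S" "card S < 3" "pw S"
  shows "\<exists>f0 f1 f2 f3. (\<forall>u\<in>S. cub f0 f1 f2 f3 (fst u) (snd u) = 0) \<and> Qv 0 f0 f1 f2 f3 < 0"
proof -
  obtain a1 b1 a2 b2 where np: "a1*b2 \<noteq> a2*b1" and cov: "\<forall>w\<in>S. w = (0,0) \<or> w = (a1,b1) \<or> w = (a2,b2)"
    using cover3[OF assms] by blast
  have np': "b1*a2 \<noteq> b2*a1" using np by (simp add: mult.commute)
  obtain f0 f1 f2 f3 where f: "cub f0 f1 f2 f3 b1 a1 = 0" "cub f0 f1 f2 f3 b2 a2 = 0" "Qv 0 f0 f1 f2 f3 > 0"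
    using key0[OF np'] by blast
  have sw: "cub f3 f2 f1 f0 a b = cub f0 f1 f2 f3 b a" for a b unfolding cub_def by algebra
  have q: "Qv 0 f3 f2 f1 f0 = - Qv 0 f0 f1 f2 f3" unfolding Qv_def by algebra
  have "\<forall>u\<in>S. cub f3 f2 f1 f0 (fst u) (snd u) = 0" using cov f sw by auto
  moreover have "Qv 0 f3 f2 f1 f0 < 0" using q f(3) by simp
  ultimately show ?thesis by (intro exI[where x=f3] exI[where x=f2] exI[where x=f1] exI[where x=f0] conjI)
qed

lemma instl_pos:
  assumes "0 < l" "l < 1/5" "finite S" "card S < 2"
  shows "\<exists>f0 f1 f2 f3. (\<forall>u\<in>S. cub f0 f1 f2 f3 (fst u) (snd u) = 0) \<and> Qv l f0 f1 f2 f3 > 0"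
proof -
  obtain u where u: "S \<subseteq> {u}" using card_lt2[OF assms(3,4)] by blast
  obtain a b where ab: "u = (a,b)" by (cases u)
  define c where "c = 1/5 - l"
  have c: "0 < c" "c < 1" using assms unfolding c_def by auto
  have e1: "1/5 - l = c" "l - 1/5 = 0 - c" unfolding c_def by simp_all
  have Q: "Qv l 0 f1 0 f3 = c * (f1 - f3)^2 + (1 - c) * f3^2" for f1 f3
    unfolding Qv_def e1 by (simp add: power2_eq_square algebra_simps)
  show ?thesis
  proof (cases "a = 0 \<and> b = 0")
    case True
    have "Qv l 0 1 0 0 > 0" using Q[of 1 0] c by simp
    moreover have "\<forall>w\<in>S. cub 0 1 0 0 (fst w) (snd w) = 0" using u ab True by auto
    ultimately show ?thesis by (intro exI[where x=0] exI[where x=1] exI[where x=0] exI[where x=0] conjI)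
  next
    case False
    have p: "a^2 + b^2 > 0" using False by (simp add: sum_power2_gt_zero_iff)
    have "a^2 - (0 - b^2) = a^2 + b^2" by simp
    then have "(a^2 - (0 - b^2))^2 > 0" using zero_less_power[OF p, of 2] by simp
    then have "c * (a^2 - (0 - b^2))^2 > 0" using c by simp
    moreover have "(1 - c) * (0 - b^2)^2 \<ge> 0" using c by simp
    ultimately have "Qv l 0 (a^2) 0 (0 - b^2) > 0" using Q[of "a^2" "0 - b^2"] by linarith
    moreover have "cub 0 (a^2) 0 (0 - b^2) a b = 0" unfolding cub_def by algebra
    then have "\<forall>w\<in>S. cub 0 (a^2) 0 (0 - b^2) (fst w) (snd w) = 0" using u ab by auto
    ultimately show ?thesis by (intro exI[where x=0] exI[where x="a^2"] exI[where x=0] exI[where x="0-b^2"] conjI)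
  qed
qed

lemma instl_neg:
  assumes "0 < l" "l < 1/5" "finite S" "card S < 2"
  shows "\<exists>f0 f1 f2 f3. (\<forall>u\<in>S. cub f0 f1 f2 f3 (fst u) (snd u) = 0) \<and> Qv l f0 f1 f2 f3 < 0"
proof -
  obtain u where u: "S \<subseteq> {u}" using card_lt2[OF assms(3,4)] by blast
  obtain a b where ab: "u = (a,b)" by (cases u)
  define c where "c = 1/5 - l"
  have c: "0 < c" "c < 1" using assms unfolding c_def by auto
  have e1: "1/5 - l = c" "l - 1/5 = 0 - c" unfolding c_def by simp_all
  have Q: "Qv l f0 0 f2 0 = 0 - (f0 - c * f2)^2 - c * (1 - c) * f2^2" for f0 f2
    unfolding Qv_def e1 by (simp add: power2_eq_square algebra_simps)
  show ?thesis
  proof (cases "a = 0 \<and> b = 0")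
    case True
    have "Qv l 1 0 0 0 < 0" using Q[of 1 0] c by simp
    moreover have "\<forall>w\<in>S. cub 1 0 0 0 (fst w) (snd w) = 0" using u ab True by auto
    ultimately show ?thesis by (intro exI[where x=1] exI[where x=0] exI[where x=0] exI[where x=0] conjI)
  next
    case False
    have p: "a^2 + b^2 > 0" using False by (simp add: sum_power2_gt_zero_iff)
    have "c * b^2 \<ge> 0" using c by simp
    moreover have "a^2 - c * (0 - b^2) = a^2 + c * b^2" by simp
    moreover have "a^2 + c * b^2 > 0"
    proof (cases "a = 0")
      case True then have "b \<noteq> 0" using False by simp
      then show ?thesis using True c by simp
    next
      case False then have "a^2 > 0" by simp
      then show ?thesis using \<open>c * b^2 \<ge> 0\<close> by linarith
    qed
    ultimately have "(a^2 - c * (0 - b^2))^2 > 0" by simp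
    moreover have "c * (1 - c) * (0 - b^2)^2 \<ge> 0" using c by simp
    ultimately have "Qv l (a^2) 0 (0 - b^2) 0 < 0" using Q[of "a^2" "0 - b^2"] by linarith
    moreover have "cub (a^2) 0 (0 - b^2) 0 a b = 0" unfolding cub_def by algebra
    then have "\<forall>w\<in>S. cub (a^2) 0 (0 - b^2) 0 (fst w) (snd w) = 0" using u ab by auto
    ultimately show ?thesis by (intro exI[where x="a^2"] exI[where x=0] exI[where x="0-b^2"] exI[where x=0] conjI)
  qed
qed

lemma inst15_pos:
  assumes "finite S" "card S < 1"
  shows "\<exists>f0 f1 f2 f3. (\<forall>u\<in>S. cub f0 f1 f2 f3 (fst u) (snd u) = 0) \<and> Qv (1/5) f0 f1 f2 f3 > 0"
proof -
  have "S = {}" using assms by auto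
  moreover have "Qv (1/5) 0 0 0 1 > 0" unfolding Qv_def by simp
  ultimately show ?thesis by (intro exI[where x=0] exI[where x=0] exI[where x=0] exI[where x=1] conjI) auto
qed

lemma inst15_neg:
  assumes "finite S" "card S < 1"
  shows "\<exists>f0 f1 f2 f3. (\<forall>u\<in>S. cub f0 f1 f2 f3 (fst u) (snd u) = 0) \<and> Qv (1/5) f0 f1 f2 f3 < 0"
proof -
  have "S = {}" using assms by auto
  moreover have "Qv (1/5) 1 0 0 0 < 0" unfolding Qv_def by simp
  ultimately show ?thesis by (intro exI[where x=1] exI[where x=0] exI[where x=0] exI[where x=0] conjI) auto
qed

lemma unique_sig:
  assumes "s \<in> badges p" "\<And>ts. represents p ts \<Longrightarrow> honest ts \<Longrightarrow> badge_le s (badge ts)"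
  shows "has_unique_signature p s"
proof -
  have all: "\<forall>b\<in>badges p. badge_le s b" using assms(2) unfolding badges_def by blast
  have le_anti: "badge_le a b \<Longrightarrow> badge_le b a \<Longrightarrow> a = b" for a b
    unfolding badge_le_def by (simp add: prod_eq_iff)
  show ?thesis unfolding has_unique_signature_def signatures_def
  proof (intro equalityI subsetI)
    fix x assume "x \<in> {s \<in> badges p. \<forall>s'\<in>badges p. badge_le s' s \<longrightarrow> s' = s}"
    then have "x \<in> badges p" "\<forall>s'\<in>badges p. badge_le s' x \<longrightarrow> s' = x" by auto
    then show "x \<in> {s}" using all assms(1) by auto
  next
    fix x assume "x \<in> {s}"
    then show "x \<in> {s \<in> badges p. \<forall>s'\<in>badges p. badge_le s' s \<longrightarrow> s' = s}"
      using assms(1) all le_anti by auto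
  qed
qed

definition Ef :: "real \<Rightarrow> real \<Rightarrow> real \<Rightarrow> real" where
  "Ef z x y = (z^2-1)*(x^6-y^6) + 6*z*(x^5*y - x*y^5) + 15*(x^4*y^2 - x^2*y^4)"

lemma Ef_id: "(t::real) \<noteq> 0 \<Longrightarrow> (1*x+t*y)^6 - (t*x+1*y)^6 = t^2*(1-t^2) * Ef (t + 1/t) x y"
  unfolding Ef_def by (simp add: field_simps) algebra

lemma combo:
  assumes "z1 \<noteq> z2" "c*(z1*z2+1) = 1"
  shows "(-c*z2/(z2-z1))*Ef z1 x y + (c*z1/(z2-z1))*Ef z2 x y = (x^6-y^6) - 15*c*(x^4*y^2 - x^2*y^4)"
proof -
  have d: "z2 - z1 \<noteq> 0" using assms(1) by simp
  have "(-c*z2)*Ef z1 x y + (c*z1)*Ef z2 x y = (z2-z1)*((x^6-y^6) - 15*c*(x^4*y^2 - x^2*y^4))"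
    using assms(2) unfolding Ef_def by algebra
  moreover have "(-c*z2/(z2-z1))*Ef z1 x y + (c*z1/(z2-z1))*Ef z2 x y = ((-c*z2)*Ef z1 x y + (c*z1)*Ef z2 x y)/(z2-z1)"
    by (simp add: add_divide_distrib diff_divide_distrib)
  ultimately show ?thesis using d by simp
qed

lemma rep_l:
  assumes l0: "0 < l" and l1: "l < 1/5"
  shows "(2,2) \<in> badges (r_lam l)"
proof -
  define t where "t = 1 + l"
  have t1: "t > 1" using l0 unfolding t_def by simp
  define z1 where "z1 = t + 1/t"
  have z1e: "z1 = 2 + l^2/(1+l)" unfolding z1_def t_def using l0
    by (simp add: field_simps power2_eq_square)
  have "l^2/(1+l) \<le> l^2" using l0 by (simp add: divide_le_eq algebra_simps power2_eq_square)
  then have z1le: "z1 \<le> 2 + l^2" using z1e by simp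
  have z1gt: "z1 > 2" using z1e l0 by simp
  define P where "P = (4+5*l)/(1-5*l)"
  have Pe: "P = 4 + 25*l/(1-5*l)" unfolding P_def using l1 by (simp add: field_simps)
  have "25*l*(1-5*l) < 25*l" using l0 by (simp add: algebra_simps)
  then have "25*l < 25*l/(1-5*l)" using l1 by (simp add: less_divide_eq)
  then have Pgt: "P > 4 + 25*l" using Pe by simp
  have "z1^2 \<le> (2+l^2)^2" using z1le z1gt by (intro power_mono) auto
  also have "\<dots> = 4 + 4*l^2 + l^4" by (simp add: power2_eq_square power4_eq_xxxx algebra_simps)
  also have "\<dots> < 4 + 25*l"
  proof -
    have a: "l^2 < l" using l0 l1 by (simp add: power2_eq_square)
    have "l^4 = l^2*l^2" by (simp add: power4_eq_xxxx power2_eq_square)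
    also have "\<dots> \<le> l^2 * 1" using a l1 by (intro mult_left_mono) auto
    finally have b: "l^4 < l" using a by simp
    show ?thesis using a b l0 by linarith
  qed
  finally have z1P: "z1^2 < P" using Pgt by simp
  define z2 where "z2 = P / z1"
  have z12: "z1 < z2" unfolding z2_def using z1P z1gt by (simp add: less_divide_eq power2_eq_square)
  have z2gt: "z2 > 2" using z12 z1gt by simp
  define c where "c = 1/5 - l"
  have c0: "c > 0" using l1 unfolding c_def by simp
  have cz: "c*(z1*z2+1) = 1" unfolding z2_def c_def P_def using z1gt l1 by (simp add: field_simps)
  define q where "q = sqrt (z2^2 - 4)"
  have z4: "(2::real)^2 \<le> z2^2" using z2gt by (intro power_mono) auto
  have q0: "q \<ge> 0" unfolding q_def using z4 by simp
  have q2: "q^2 = z2^2 - 4" unfolding q_def using z4 by (simp del: power_mono_iff)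
  define s where "s = (z2 + q)/2"
  have s1: "s > 1" unfolding s_def using z2gt q0 by simp
  have "s^2 - z2*s + 1 = 0" unfolding s_def using q2 by (simp add: field_simps power2_eq_square)
  then have sz: "s + 1/s = z2" using s1 by (simp add: field_simps power2_eq_square)
  have st: "s \<noteq> t" using sz z12 unfolding z1_def by auto
  define W1 where "W1 = -c*z2/(z2-z1)"
  define W2 where "W2 = c*z1/(z2-z1)"
  define w1 where "w1 = W1/(t^2*(1-t^2))"
  define w2 where "w2 = W2/(s^2*(1-s^2))"
  have dt: "t^2*(1-t^2) < 0" using t1 by (simp add: mult_pos_neg)
  have ds: "s^2*(1-s^2) < 0" using s1 by (simp add: mult_pos_neg)
  have W1n: "W1 < 0" unfolding W1_def using c0 z12 z2gt by (simp add: divide_neg_pos mult_pos_pos)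
  have W2p: "W2 > 0" unfolding W2_def using c0 z12 z1gt by simp
  have w1p: "w1 > 0" unfolding w1_def using W1n dt by (simp add: divide_neg_neg)
  have w2n: "w2 < 0" unfolding w2_def using W2p ds by (simp add: divide_pos_neg)
  define ts where "ts = [(w1,1,t),(-w1,t,1),(w2,1,s),(-w2,s,1)]"
  have rep: "represents (r_lam l) ts"
    unfolding represents_def
  proof (intro conjI allI)
    show "\<forall>t\<in>set ts. fst t \<noteq> 0" unfolding ts_def using w1p w2n by auto
    fix x y :: real
    have "(\<Sum>t\<leftarrow>ts. fst t * (fst (snd t) * x + snd (snd t) * y) ^ 6)
       = w1*((1*x+t*y)^6 - (t*x+1*y)^6) + w2*((1*x+s*y)^6 - (s*x+1*y)^6)"
      unfolding ts_def by (simp add: algebra_simps)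
    also have "\<dots> = w1*(t^2*(1-t^2))*Ef z1 x y + w2*(s^2*(1-s^2))*Ef z2 x y"
      using Ef_id[of t x y] Ef_id[of s x y] t1 s1 sz unfolding z1_def by simp
    also have "\<dots> = W1*Ef z1 x y + W2*Ef z2 x y"
    proof -
      have a: "t^2*(1-t^2) \<noteq> 0" "s^2*(1-s^2) \<noteq> 0" using dt ds by linarith+
      have "w1*(t^2*(1-t^2)) = W1" "w2*(s^2*(1-s^2)) = W2" unfolding w1_def w2_def using a by simp_all
      then show ?thesis by simp
    qed
    also have "\<dots> = (x^6-y^6) - 15*c*(x^4*y^2 - x^2*y^4)" unfolding W1_def W2_def
      using combo[of z1 z2 c x y] z12 cz by simp
    also have "\<dots> = r_lam l x y" unfolding r_lam_def c_def by (simp add: algebra_simps power2_eq_square power3_eq_cube) algebra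
    finally show "r_lam l x y = (\<Sum>t\<leftarrow>ts. fst t * (fst (snd t) * x + snd (snd t) * y) ^ 6)" by simp
  qed
  have tt: "t*t \<noteq> 1" "s*s \<noteq> 1" "s*t \<noteq> 1" "t*s \<noteq> 1" "s \<noteq> t" "t \<noteq> s"
  proof -
    have "1 < t*t" "1 < s*s" "1 < s*t" "1 < t*s" using t1 s1 by (simp_all add: less_1_mult)
    then show "t*t \<noteq> 1" "s*s \<noteq> 1" "s*t \<noteq> 1" "t*s \<noteq> 1" "s \<noteq> t" "t \<noteq> s" using st by auto
  qed
  have hon: "honest ts" unfolding honest_def ts_def
    using tt by (auto simp: less_Suc_eq nth_Cons' eval_nat_numeral)
  have bd: "badge ts = (2,2)" unfolding badge_def ts_def using w1p w2n by simp
  show ?thesis unfolding badges_def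
    by (rule CollectI, rule exI[where x=ts]) (use rep hon bd in simp)
qed

lemma rep_0: "(3,3) \<in> badges (r_lam 0)"
proof -
  define ts :: "term6 list" where "ts = [(259/5250,1,2),(-259/5250,2,1),(13/5250,1,-2),(-13/5250,-2,1),(-41/7000,1,3),(41/7000,3,1)]"
  have rep: "represents (r_lam 0) ts"
    unfolding represents_def
  proof (intro conjI allI)
    show "\<forall>t\<in>set ts. fst t \<noteq> 0" unfolding ts_def by auto
    fix x y :: real
    have "r_lam 0 x y = 259/5250*(x+2*y)^6 - 259/5250*(2*x+y)^6 + 13/5250*(x-2*y)^6 - 13/5250*(-2*x+y)^6 - 41/7000*(x+3*y)^6 + 41/7000*(3*x+y)^6"
      unfolding r_lam_def by algebra
    then show "r_lam 0 x y = (\<Sum>t\<leftarrow>ts. fst t * (fst (snd t) * x + snd (snd t) * y) ^ 6)"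
      unfolding ts_def by (simp add: algebra_simps)
  qed
  have hon: "honest ts" unfolding honest_def ts_def
    by (auto simp: less_Suc_eq nth_Cons' eval_nat_numeral)
  have bd: "badge ts = (3,3)" unfolding badge_def ts_def by simp
  show ?thesis unfolding badges_def
    by (rule CollectI, rule exI[where x=ts]) (use rep hon bd in simp)
qed

lemma rep_15: "(1,1) \<in> badges (r_lam (1/5))"
proof -
  define ts :: "term6 list" where "ts = [(1,1,0),(-1,0,1)]"
  have rep: "represents (r_lam (1/5)) ts"
    unfolding represents_def
  proof (intro conjI allI)
    show "\<forall>t\<in>set ts. fst t \<noteq> 0" unfolding ts_def by auto
    fix x y :: real
    have "r_lam (1/5) x y = x^6 - y^6"
      unfolding r_lam_def by (simp add: algebra_simps power2_eq_square power3_eq_cube) algebra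
    then show "r_lam (1/5) x y = (\<Sum>t\<leftarrow>ts. fst t * (fst (snd t) * x + snd (snd t) * y) ^ 6)"
      unfolding ts_def by simp
  qed
  have hon: "honest ts" unfolding honest_def ts_def
    by (auto simp: less_Suc_eq nth_Cons')
  have bd: "badge ts = (1,1)" unfolding badge_def ts_def by simp
  show ?thesis unfolding badges_def
    by (rule CollectI, rule exI[where x=ts]) (use rep hon bd in simp)
qed

theorem mainTheorem16:
  shows "has_unique_signature (r_lam 0) (3, 3)
       \<and> has_unique_signature (r_lam (1/5)) (1, 1)
       \<and> (\<forall>l::real. 0 < l \<and> l < 1/5 \<longrightarrow> has_unique_signature (r_lam l) (2, 2))"
proof (intro conjI allI impI)
  show "has_unique_signature (r_lam 0) (3, 3)"
  proof (rule unique_sig[OF rep_0])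
    fix ts assume "represents (r_lam 0) ts" "honest ts"
    then have "3 \<le> fst (badge ts)" "3 \<le> snd (badge ts)"
      using lb_pos[of 0 ts 3] lb_neg[of 0 ts 3] inst0_pos inst0_neg by blast+
    then show "badge_le (3,3) (badge ts)" unfolding badge_le_def by simp
  qed
  show "has_unique_signature (r_lam (1/5)) (1, 1)"
  proof (rule unique_sig[OF rep_15])
    fix ts assume "represents (r_lam (1/5)) ts" "honest ts"
    then have "1 \<le> fst (badge ts)" "1 \<le> snd (badge ts)"
      using lb_pos[of "1/5" ts 1] lb_neg[of "1/5" ts 1] inst15_pos inst15_neg by blast+
    then show "badge_le (1,1) (badge ts)" unfolding badge_le_def by simp
  qed
  fix l :: real assume "0 < l \<and> l < 1/5"
  then have l: "0 < l" "l < 1/5" by auto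
  show "has_unique_signature (r_lam l) (2, 2)"
  proof (rule unique_sig[OF rep_l[OF l]])
    fix ts assume "represents (r_lam l) ts" "honest ts"
    then have "2 \<le> fst (badge ts)" "2 \<le> snd (badge ts)"
      using lb_pos[of l ts 2] lb_neg[of l ts 2] instl_pos[OF l] instl_neg[OF l] by blast+
    then show "badge_le (2,2) (badge ts)" unfolding badge_le_def by simp
  qed
qed

end
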